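(* Let $\tfrac12\le s<1$ and for $\varepsilon>0$ let $B_\varepsilon=\{(x,y)\in\mathbb{R}^n\times\mathbb{R}^n:|x-y|<\varepsilon\}$ and $B_\varepsilon^c$ its complement in $\mathbb{R}^{2n}$. For every $\Phi\in\mathscr{C}_c^\infty(\mathbb{R}^{2n})$ the limit $$\langle\!\langle S,\Phi\rangle\!\rangle=\lim_{\varepsilon\to0}\iint_{B^c_\varepsilon}\frac{\Phi(x,y)-\Phi(x,x)}{|x-y|^{n+2s}}\,dx\,dy$$ exists (each integral converging absolutely), and $S$ is a distribution in $\mathscr{D}'(\mathbb{R}^{2n})$.
   Context: $\mathscr{D}'(\mathbb{R}^{2n})$ is the space of linear functionals on $\mathscr{C}_c^\infty(\mathbb{R}^{2n})$ continuous for its usual topology. *)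

theory Defs
  imports "HOL-Analysis.Analysis"
begin

fun dderiv :: "'a::euclidean_space list \<Rightarrow> ('a \<Rightarrow> real) \<Rightarrow> 'a \<Rightarrow> real" where
  "dderiv [] f = f"
| "dderiv (v # vs) f = (\<lambda>x. frechet_derivative (dderiv vs f) (at x) v)"

definition smooth :: "('a::euclidean_space \<Rightarrow> real) \<Rightarrow> bool" where
  "smooth f \<longleftrightarrow> (\<forall>vs. set vs \<subseteq> Basis \<longrightarrow> (\<forall>x. dderiv vs f differentiable (at x)))"

definition tsupport :: "('a::euclidean_space \<Rightarrow> real) \<Rightarrow> 'a set" where
  "tsupport f = closure {x. f x \<noteq> 0}"

definition test_fun :: "('a::euclidean_space \<Rightarrow> real) \<Rightarrow> bool" where
  "test_fun f \<longleftrightarrow> smooth f \<and> compact (tsupport f)"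

definition Cm_seminorm :: "nat \<Rightarrow> ('a::euclidean_space \<Rightarrow> real) \<Rightarrow> real" where
  "Cm_seminorm m f = (\<Sum>vs\<in>{vs. set vs \<subseteq> Basis \<and> length vs \<le> m}. (SUP x. \<bar>dderiv vs f x\<bar>))"

text \<open>A distribution: a linear functional on C_c^infinity which is continuous for the usual
  (inductive limit) topology, i.e. continuous on each D_K, i.e. bounded on D_K by
  finitely many seminorms.\<close>
definition distribution :: "(('a::euclidean_space \<Rightarrow> real) \<Rightarrow> real) \<Rightarrow> bool" where
  "distribution T \<longleftrightarrow>
     (\<forall>f g. test_fun f \<longrightarrow> test_fun g \<longrightarrow> T (\<lambda>x. f x + g x) = T f + T g) \<and>
     (\<forall>c f. test_fun f \<longrightarrow> T (\<lambda>x. c * f x) = c * T f) \<and>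
     (\<forall>K. compact K \<longrightarrow> (\<exists>C m. \<forall>f. test_fun f \<and> tsupport f \<subseteq> K \<longrightarrow>
          \<bar>T f\<bar> \<le> C * Cm_seminorm m f))"

definition Bc :: "real \<Rightarrow> ((real^'n) \<times> (real^'n)) set" where
  "Bc \<epsilon> = {z. dist (fst z) (snd z) \<ge> \<epsilon>}"

definition kernel_S :: "real \<Rightarrow> ((real^'n) \<times> (real^'n) \<Rightarrow> real) \<Rightarrow> (real^'n) \<times> (real^'n) \<Rightarrow> real" where
  "kernel_S s \<Phi> z = (\<Phi> z - \<Phi> (fst z, fst z)) / norm (fst z - snd z) powr (real CARD('n) + 2 * s)"

definition trunc_S :: "real \<Rightarrow> ((real^'n) \<times> (real^'n) \<Rightarrow> real) \<Rightarrow> real \<Rightarrow> real" where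
  "trunc_S s \<Phi> \<epsilon> = (LINT z:Bc \<epsilon>|lborel. kernel_S s \<Phi> z)"

definition S_op :: "real \<Rightarrow> ((real^'n) \<times> (real^'n) \<Rightarrow> real) \<Rightarrow> real" where
  "S_op s \<Phi> = Lim (at_right 0) (trunc_S s \<Phi>)"

end

theory Submission
  imports Defs
begin

lemma pow_powr: "0 < (x::real) \<Longrightarrow> (x ^ k) powr c = (x powr c) ^ k"
  by (simp add: powr_realpow[symmetric] powr_powr mult.commute)

lemma ennreal_le_suminf: "(f::nat \<Rightarrow> ennreal) k \<le> suminf f"
  using sum_le_suminf[of f "{k}"] by (simp add: summableI)

lemma shell_bound:
  fixes B r :: real
  assumes r: "r > 0" and B: "B \<ge> 0"
    and fb: "\<And>h::'a::euclidean_space. r/2 \<le> norm h \<Longrightarrow> norm h < r \<Longrightarrow> f h \<le> B"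
  shows "(\<integral>\<^sup>+ h. indicator {h::'a. r/2 \<le> norm h \<and> norm h < r} h * ennreal (f h) \<partial>lborel)
     \<le> ennreal (B * (unit_ball_vol DIM('a) * r ^ DIM('a)))"
proof -
  have "(\<integral>\<^sup>+ h. indicator {h::'a. r/2 \<le> norm h \<and> norm h < r} h * ennreal (f h) \<partial>lborel)
      \<le> (\<integral>\<^sup>+ h. ennreal B * indicator (ball (0::'a) r) h \<partial>lborel)"
    by (intro nn_integral_mono) (auto simp: indicator_def fb ennreal_leI)
  also have "\<dots> = ennreal B * emeasure lborel (ball (0::'a) r)"
    by (simp add: nn_integral_cmult_indicator)
  also have "\<dots> = ennreal (B * (unit_ball_vol DIM('a) * r ^ DIM('a)))"
    using r B by (simp add: emeasure_ball ennreal_mult)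
  finally show ?thesis .
qed

lemma radial_near:
  fixes a :: real
  assumes a0: "0 \<le> a" and a: "a < DIM('a) + 2"
  shows "(\<integral>\<^sup>+ h. indicator {h::'a::euclidean_space. norm h < 1} h * ennreal (norm h ^ 2 / norm h powr a) \<partial>lborel) < \<infinity>"
proof -
  define V where "V = unit_ball_vol DIM('a)"
  define q where "q = (1/2::real) powr (DIM('a) + 2 - a)"
  define A where "A k = {h::'a. (1/2::real)^k/2 \<le> norm h \<and> norm h < (1/2)^k}" for k :: nat
  define g where "g h = ennreal (norm h ^ 2 / norm h powr a)" for h :: 'a
  have q0: "0 \<le> q" "q < 1" using a by (auto simp: q_def powr01_less_one)
  have V0: "V \<ge> 0" by (simp add: V_def)
  have pt: "indicator {h::'a. norm h < 1} h * g h \<le> (\<Sum>k. indicator (A k) h * g h)" for h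
  proof (cases "h = 0 \<or> \<not> norm h < 1")
    case True then show ?thesis by (auto simp: g_def)
  next
    case False
    then have h0: "h \<noteq> 0" and h1: "norm h < 1" by auto
    obtain m where m: "(1/2::real)^m < norm h" using real_arch_pow_inv[of "norm h" "1/2"] h0 by auto
    have "(1/2::real)^m / 2 \<le> (1/2)^m" by simp
    then have ex: "(1/2::real)^m / 2 \<le> norm h" using m by linarith
    define k where "k = (LEAST k. (1/2::real)^k / 2 \<le> norm h)"
    have k1: "(1/2::real)^k/2 \<le> norm h" unfolding k_def by (rule LeastI[where P="\<lambda>k. (1/2::real)^k / 2 \<le> norm h", OF ex])
    have k2: "norm h < (1/2)^k"
    proof (cases k)
      case 0 then show ?thesis using h1 by simp
    next
      case (Suc j)
      then have "\<not> (1/2::real)^j/2 \<le> norm h"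
        using not_less_Least[of j "\<lambda>k. (1/2::real)^k / 2 \<le> norm h"] k_def by auto
      then show ?thesis using Suc by simp
    qed
    have "h \<in> A k" using k1 k2 by (simp add: A_def)
    then have "indicator {h::'a. norm h < 1} h * g h = indicator (A k) h * g h" using h1 by simp
    also have "\<dots> \<le> (\<Sum>k. indicator (A k) h * g h)" by (rule ennreal_le_suminf)
    finally show ?thesis .
  qed
  have shell: "(\<integral>\<^sup>+ h. indicator (A k) h * g h \<partial>lborel) \<le> ennreal (V * 2 powr a * q ^ k)" for k
  proof -
    define r :: real where "r = (1/2)^k"
    have r0: "r > 0" by (simp add: r_def)
    have "(\<integral>\<^sup>+ h. indicator (A k) h * g h \<partial>lborel)
       \<le> ennreal ((r^2 / (r/2) powr a) * (V * r ^ DIM('a)))"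
      unfolding A_def g_def V_def r_def[symmetric]
    proof (rule shell_bound[OF r0])
      show "0 \<le> r^2 / (r/2) powr a" using r0 by simp
      fix h :: 'a assume h: "r/2 \<le> norm h" "norm h < r"
      have "norm h ^ 2 \<le> r ^ 2" using h by (intro power_mono) auto
      moreover have "(r/2) powr a \<le> norm h powr a" using h a0 r0 by (intro powr_mono2) auto
      moreover have "(r/2) powr a > 0" using r0 by simp
      ultimately show "norm h ^ 2 / norm h powr a \<le> r^2 / (r/2) powr a"
        by (intro frac_le) auto
    qed
    also have "(r^2 / (r/2) powr a) * (V * r ^ DIM('a)) = V * 2 powr a * (r powr (DIM('a) + 2 - a))"
    proof -
      have e1: "r^2 = r powr 2" using powr_realpow[of r 2] r0 by simp
      have e2: "r^DIM('a) = r powr DIM('a)" using powr_realpow[of r "DIM('a)"] r0 by simp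
      have e3: "r powr (DIM('a) + 2 - a) = r powr DIM('a) * r powr 2 / r powr a"
        by (simp add: powr_diff powr_add)
      have p1: "r powr a > 0" "(2::real) powr a > 0" using r0 by auto
      show ?thesis unfolding e1 e2 e3 powr_divide using p1 by (simp add: field_simps)
    qed
    also have "r powr (DIM('a) + 2 - a) = q ^ k"
      unfolding r_def q_def by (simp add: pow_powr)
    finally show ?thesis .
  qed
  have "(\<integral>\<^sup>+ h. indicator {h::'a. norm h < 1} h * g h \<partial>lborel)
      \<le> (\<integral>\<^sup>+ h. (\<Sum>k. indicator (A k) h * g h) \<partial>lborel)"
    by (intro nn_integral_mono pt)
  also have "\<dots> = (\<Sum>k. \<integral>\<^sup>+ h. indicator (A k) h * g h \<partial>lborel)"
    by (rule nn_integral_suminf) (auto simp: A_def g_def)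
  also have "\<dots> \<le> (\<Sum>k. ennreal (V * 2 powr a * q ^ k))"
    by (intro suminf_le shell summableI)
  also have "\<dots> < \<infinity>"
  proof -
    have "summable (\<lambda>k. V * 2 powr a * q ^ k)"
      using q0 by (intro summable_mult summable_geometric) auto
    then show ?thesis using V0 q0 by (simp add: ennreal_suminf_neq_top less_top[symmetric])
  qed
  finally show ?thesis by (simp add: g_def)
qed

lemma radial_far:
  fixes a :: real
  assumes a: "DIM('a) < a"
  shows "(\<integral>\<^sup>+ h. indicator {h::'a::euclidean_space. 1 \<le> norm h} h * ennreal (1 / norm h powr a) \<partial>lborel) < \<infinity>"
proof -
  define V where "V = unit_ball_vol DIM('a)"
  define q where "q = (2::real) powr (DIM('a) - a)"
  define A where "A k = {h::'a. (2::real)^(Suc k)/2 \<le> norm h \<and> norm h < 2^(Suc k)}" for k :: nat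
  define g where "g h = ennreal (1 / norm h powr a)" for h :: 'a
  have q0: "0 \<le> q" "q < 1" using a by (auto simp: q_def powr_less_one)
  have V0: "V \<ge> 0" by (simp add: V_def)
  have pt: "indicator {h::'a. 1 \<le> norm h} h * g h \<le> (\<Sum>k. indicator (A k) h * g h)" for h
  proof (cases "1 \<le> norm h")
    case False then show ?thesis by (auto simp: g_def)
  next
    case True
    obtain m where m: "norm h < (2::real)^m" using real_arch_pow[of 2 "norm h"] by auto
    have "(2::real)^m \<le> 2^Suc m" by simp
    then have ex: "norm h < (2::real)^Suc m" using m by linarith
    define k where "k = (LEAST k. norm h < (2::real)^Suc k)"
    have k1: "norm h < (2::real)^Suc k" unfolding k_def by (rule LeastI[where P="\<lambda>k. norm h < (2::real)^Suc k", OF ex])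
    have k2: "(2::real)^Suc k/2 \<le> norm h"
    proof (cases k)
      case 0 then show ?thesis using True by simp
    next
      case (Suc j)
      then have "\<not> norm h < (2::real)^Suc j"
        using not_less_Least[of j "\<lambda>k. norm h < (2::real)^Suc k"] k_def by auto
      then show ?thesis using Suc by simp
    qed
    have "h \<in> A k" using k1 k2 by (simp add: A_def)
    then have "indicator {h::'a. 1 \<le> norm h} h * g h = indicator (A k) h * g h" using True by simp
    also have "\<dots> \<le> (\<Sum>k. indicator (A k) h * g h)" by (rule ennreal_le_suminf)
    finally show ?thesis .
  qed
  have shell: "(\<integral>\<^sup>+ h. indicator (A k) h * g h \<partial>lborel) \<le> ennreal (V * 2 powr a * q * q ^ k)" for k
  proof -
    define r :: real where "r = 2^Suc k"
    have r0: "r > 0" by (simp add: r_def)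
    have "(\<integral>\<^sup>+ h. indicator (A k) h * g h \<partial>lborel)
       \<le> ennreal ((1 / (r/2) powr a) * (V * r ^ DIM('a)))"
      unfolding A_def g_def V_def r_def[symmetric]
    proof (rule shell_bound[OF r0])
      show "0 \<le> 1 / (r/2) powr a" using r0 by simp
      fix h :: 'a assume h: "r/2 \<le> norm h" "norm h < r"
      have "(r/2) powr a \<le> norm h powr a" using h a r0 by (intro powr_mono2) auto
      moreover have "(r/2) powr a > 0" using r0 by simp
      moreover have "norm h powr a > 0" using h r0 by auto
      ultimately show "1 / norm h powr a \<le> 1 / (r/2) powr a"
        by (intro divide_left_mono) auto
    qed
    also have "(1 / (r/2) powr a) * (V * r ^ DIM('a)) = V * 2 powr a * (r powr (DIM('a) - a))"
    proof -
      have e2: "r^DIM('a) = r powr DIM('a)" using powr_realpow[of r "DIM('a)"] r0 by simp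
      have e3: "r powr (DIM('a) - a) = r powr DIM('a) / r powr a"
        by (simp add: powr_diff)
      have p1: "r powr a > 0" "(2::real) powr a > 0" using r0 by auto
      show ?thesis unfolding e2 e3 powr_divide using p1 by (simp add: field_simps)
    qed
    also have "r powr (DIM('a) - a) = q * q ^ k"
      unfolding r_def q_def using pow_powr[of 2 "Suc k" "DIM('a) - a"] by (simp only: power_Suc)
    finally show ?thesis by (simp add: mult.assoc)
  qed
  have "(\<integral>\<^sup>+ h. indicator {h::'a. 1 \<le> norm h} h * g h \<partial>lborel)
      \<le> (\<integral>\<^sup>+ h. (\<Sum>k. indicator (A k) h * g h) \<partial>lborel)"
    by (intro nn_integral_mono pt)
  also have "\<dots> = (\<Sum>k. \<integral>\<^sup>+ h. indicator (A k) h * g h \<partial>lborel)"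
    by (rule nn_integral_suminf) (auto simp: A_def g_def)
  also have "\<dots> \<le> (\<Sum>k. ennreal (V * 2 powr a * q * q ^ k))"
    by (intro suminf_le shell summableI)
  also have "\<dots> < \<infinity>"
  proof -
    have "summable (\<lambda>k. V * 2 powr a * q * q ^ k)"
      using q0 by (intro summable_mult summable_geometric) auto
    then show ?thesis using V0 q0 by (simp add: ennreal_suminf_neq_top less_top[symmetric])
  qed
  finally show ?thesis by (simp add: g_def)
qed


lemma dderiv_outside:
  fixes f :: "'a::euclidean_space \<Rightarrow> real"
  assumes "z \<notin> tsupport f"
  shows "dderiv vs f z = 0"
  using assms
proof (induction vs arbitrary: z)
  case Nil
  then show ?case using closure_subset[of "{x. f x \<noteq> 0}"] by (auto simp: tsupport_def)
next
  case (Cons v vs)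
  have "((\<lambda>_. 0::real) has_derivative (\<lambda>_. 0)) (at z)" by simp
  then have "(dderiv vs f has_derivative (\<lambda>_. 0)) (at z)"
    by (rule has_derivative_transform_within_open[where s="- tsupport f"])
       (use Cons in \<open>auto simp: tsupport_def\<close>)
  then have "frechet_derivative (dderiv vs f) (at z) = (\<lambda>_. 0)"
    by (rule frechet_derivative_at[symmetric])
  then show ?case by simp
qed

lemma smooth_diff: "smooth f \<Longrightarrow> set vs \<subseteq> Basis \<Longrightarrow> dderiv vs f differentiable (at x)"
  by (simp add: smooth_def)

lemma test_bdd:
  fixes f :: "'a::euclidean_space \<Rightarrow> real"
  assumes f: "test_fun f" and vs: "set vs \<subseteq> Basis"
  shows "bdd_above (range (\<lambda>x. \<bar>dderiv vs f x\<bar>))"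
proof -
  have cont: "continuous_on UNIV (dderiv vs f)"
    using f vs unfolding test_fun_def
    by (intro continuous_at_imp_continuous_on ballI differentiable_imp_continuous_within smooth_diff) auto
  have "compact (dderiv vs f ` tsupport f)"
    using f cont unfolding test_fun_def by (intro compact_continuous_image continuous_on_subset[OF cont]) auto
  then obtain B where B: "\<And>y. y \<in> dderiv vs f ` tsupport f \<Longrightarrow> norm y \<le> B"
    using compact_imp_bounded bounded_iff by metis
  have "\<bar>dderiv vs f x\<bar> \<le> max B 0" for x
    using B[of "dderiv vs f x"] dderiv_outside[of x f vs]
    by (cases "x \<in> tsupport f") force+
  then show ?thesis by (intro bdd_aboveI) auto
qed

lemma test_le_sup:
  fixes f :: "'a::euclidean_space \<Rightarrow> real"
  assumes f: "test_fun f" and vs: "set vs \<subseteq> Basis"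
  shows "\<bar>dderiv vs f x\<bar> \<le> (SUP x. \<bar>dderiv vs f x\<bar>)"
  using test_bdd[OF f vs] by (intro cSUP_upper) auto

lemma test_sup_nonneg:
  fixes f :: "'a::euclidean_space \<Rightarrow> real"
  assumes f: "test_fun f" and vs: "set vs \<subseteq> Basis"
  shows "0 \<le> (SUP x. \<bar>dderiv vs f x\<bar>)"
  using test_le_sup[OF f vs, of 0] by linarith

lemma finite_lists_Basis: "finite {vs::'a::euclidean_space list. set vs \<subseteq> Basis \<and> length vs \<le> m}"
  by (rule finite_lists_length_le) simp

lemma sup_le_Cm:
  fixes f :: "'a::euclidean_space \<Rightarrow> real"
  assumes f: "test_fun f" and vs: "set vs \<subseteq> Basis" "length vs \<le> m"
  shows "(SUP x. \<bar>dderiv vs f x\<bar>) \<le> Cm_seminorm m f"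
  unfolding Cm_seminorm_def
  by (rule member_le_sum) (use vs finite_lists_Basis test_sup_nonneg[OF f] in auto)

lemma test_le_Cm:
  fixes f :: "'a::euclidean_space \<Rightarrow> real"
  assumes f: "test_fun f" and vs: "set vs \<subseteq> Basis" "length vs \<le> m"
  shows "\<bar>dderiv vs f x\<bar> \<le> Cm_seminorm m f"
  using test_le_sup[OF f vs(1), of x] sup_le_Cm[OF assms] by linarith

lemma test_abs_le_Cm:
  fixes f :: "'a::euclidean_space \<Rightarrow> real"
  assumes f: "test_fun f"
  shows "\<bar>f x\<bar> \<le> Cm_seminorm m f"
  using test_le_Cm[OF f, of "[]" m x] by simp

lemma line_deriv:
  fixes f :: "'a::euclidean_space \<Rightarrow> real"
  assumes d: "\<And>y. f differentiable (at y)"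
  shows "((\<lambda>t. f (z + t *\<^sub>R v)) has_real_derivative
           (\<Sum>b\<in>Basis. (v \<bullet> b) * dderiv [b] f (z + t *\<^sub>R v))) (at t)"
proof -
  define y where "y = z + t *\<^sub>R v"
  define F where "F = frechet_derivative f (at y)"
  have fd: "(f has_derivative F) (at y)" unfolding F_def using d frechet_derivative_works by blast
  have lin: "linear F" using fd has_derivative_linear by blast
  have ld: "((\<lambda>t. z + t *\<^sub>R v) has_derivative (\<lambda>d. d *\<^sub>R v)) (at t)"
    by (auto intro!: derivative_eq_intros)
  have "((\<lambda>t. f (z + t *\<^sub>R v)) has_derivative (\<lambda>d. F (d *\<^sub>R v))) (at t)"
    using has_derivative_compose[OF ld] fd unfolding y_def by blast
  moreover have "(\<lambda>d. F (d *\<^sub>R v)) = (*) (F v)"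
    using linear_cmul[OF lin] by (auto simp: fun_eq_iff)
  moreover have "F v = (\<Sum>b\<in>Basis. (v \<bullet> b) * dderiv [b] f y)"
    using Linear_Algebra.linear_componentwise[OF lin, of v 1] by (simp add: F_def)
  ultimately show ?thesis unfolding has_field_derivative_def y_def by simp
qed

lemma second_diff_real:
  fixes \<phi> \<phi>1 \<phi>2 :: "real \<Rightarrow> real"
  assumes d1: "\<And>t. (\<phi> has_real_derivative \<phi>1 t) (at t)"
    and d2: "\<And>t. (\<phi>1 has_real_derivative \<phi>2 t) (at t)"
    and B: "\<And>t. \<bar>\<phi>2 t\<bar> \<le> B"
  shows "\<bar>\<phi> 1 + \<phi> (-1) - 2 * \<phi> 0\<bar> \<le> 2 * B"
proof -
  define \<psi> where "\<psi> t = \<phi> t + \<phi> (- t)" for t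
  have dpsi: "(\<psi> has_real_derivative (\<phi>1 t - \<phi>1 (-t))) (at t)" for t
    unfolding \<psi>_def
    by (auto intro!: derivative_eq_intros DERIV_chain2[OF d1] d1)
  obtain \<xi> where \<xi>: "0 < \<xi>" "\<xi> < 1" "\<psi> 1 - \<psi> 0 = (1 - 0) * (\<phi>1 \<xi> - \<phi>1 (-\<xi>))"
    using MVT2[of 0 1 \<psi> "\<lambda>t. \<phi>1 t - \<phi>1 (-t)"] dpsi by auto
  obtain \<eta> where \<eta>: "\<phi>1 \<xi> - \<phi>1 (-\<xi>) = (\<xi> - (-\<xi>)) * \<phi>2 \<eta>"
    using MVT2[of "-\<xi>" \<xi> \<phi>1 \<phi>2] d2 \<xi> by auto
  have "\<bar>\<phi> 1 + \<phi> (-1) - 2 * \<phi> 0\<bar> = \<bar>(2 * \<xi>) * \<phi>2 \<eta>\<bar>"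
    using \<xi> \<eta> by (simp add: \<psi>_def)
  also have "\<dots> = 2 * \<xi> * \<bar>\<phi>2 \<eta>\<bar>" using \<xi> by (simp add: abs_mult)
  also have "\<dots> \<le> 2 * 1 * B"
    using \<xi> B[of \<eta>] abs_ge_zero[of "\<phi>2 \<eta>"] by (intro mult_mono) auto
  finally show ?thesis by simp
qed

lemma sum_pairs_le_Cm:
  fixes f :: "'a::euclidean_space \<Rightarrow> real"
  assumes f: "test_fun f"
  shows "(\<Sum>b\<in>Basis. \<Sum>c\<in>Basis. (SUP x. \<bar>dderiv [c, b] f x\<bar>)) \<le> Cm_seminorm 2 f"
proof -
  let ?g = "\<lambda>vs. (SUP x. \<bar>dderiv vs f x\<bar>)"
  have "(\<Sum>b\<in>Basis. \<Sum>c\<in>Basis. ?g [c, b]) = (\<Sum>(b, c)\<in>Basis \<times> Basis. ?g [c, b])"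
    by (rule sum.cartesian_product)
  also have "\<dots> = sum ?g ((\<lambda>(b, c). [c, b]) ` (Basis \<times> Basis))"
    by (subst sum.reindex) (auto simp: inj_on_def case_prod_beta)
  also have "\<dots> \<le> sum ?g {vs::'a list. set vs \<subseteq> Basis \<and> length vs \<le> 2}"
    by (rule sum_mono2) (use finite_lists_Basis test_sup_nonneg[OF f] in auto)
  finally show ?thesis by (simp add: Cm_seminorm_def)
qed

lemma second_diff_test:
  fixes f :: "'a::euclidean_space \<Rightarrow> real"
  assumes f: "test_fun f"
  shows "\<bar>f (z + v) + f (z - v) - 2 * f z\<bar> \<le> 2 * (norm v ^ 2 * Cm_seminorm 2 f)"
proof -
  have sm: "smooth f" using f by (simp add: test_fun_def)
  have d0: "\<And>y. f differentiable (at y)" using smooth_diff[OF sm, of "[]"] by simp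
  have db: "\<And>y. dderiv [b] f differentiable (at y)" if "b \<in> Basis" for b
    using smooth_diff[OF sm, of "[b]"] that by simp
  define \<phi>1 where "\<phi>1 t = (\<Sum>b\<in>Basis. (v \<bullet> b) * dderiv [b] f (z + t *\<^sub>R v))" for t
  define \<phi>2 where "\<phi>2 t = (\<Sum>b\<in>Basis. (v \<bullet> b) * (\<Sum>c\<in>Basis. (v \<bullet> c) * dderiv [c, b] f (z + t *\<^sub>R v)))" for t
  have D1: "((\<lambda>t. f (z + t *\<^sub>R v)) has_real_derivative \<phi>1 t) (at t)" for t
    unfolding \<phi>1_def by (rule line_deriv[OF d0])
  have D2: "(\<phi>1 has_real_derivative \<phi>2 t) (at t)" for t
    unfolding \<phi>1_def \<phi>2_def
  proof (intro DERIV_sum DERIV_cmult)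
    fix b :: 'a assume b: "b \<in> Basis"
    show "((\<lambda>t. dderiv [b] f (z + t *\<^sub>R v)) has_real_derivative
            (\<Sum>c\<in>Basis. (v \<bullet> c) * dderiv [c, b] f (z + t *\<^sub>R v))) (at t)"
      using line_deriv[OF db[OF b], where z=z and v=v and t=t] by simp
  qed
  have B: "\<bar>\<phi>2 t\<bar> \<le> norm v ^ 2 * Cm_seminorm 2 f" for t
  proof -
    let ?y = "z + t *\<^sub>R v"
    have "\<bar>\<phi>2 t\<bar> \<le> (\<Sum>b\<in>Basis. \<bar>(v \<bullet> b) * (\<Sum>c\<in>Basis. (v \<bullet> c) * dderiv [c, b] f ?y)\<bar>)"
      unfolding \<phi>2_def by (rule sum_abs)
    also have "\<dots> \<le> (\<Sum>b\<in>Basis. norm v * (\<Sum>c\<in>Basis. norm v * (SUP x. \<bar>dderiv [c, b] f x\<bar>)))"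
    proof (rule sum_mono)
      fix b :: 'a assume b: "b \<in> Basis"
      have inner: "\<bar>\<Sum>c\<in>Basis. (v \<bullet> c) * dderiv [c, b] f ?y\<bar> \<le> (\<Sum>c\<in>Basis. norm v * (SUP x. \<bar>dderiv [c, b] f x\<bar>))"
      proof -
        have "\<bar>\<Sum>c\<in>Basis. (v \<bullet> c) * dderiv [c, b] f ?y\<bar> \<le> (\<Sum>c\<in>Basis. \<bar>(v \<bullet> c) * dderiv [c, b] f ?y\<bar>)"
          by (rule sum_abs)
        also have "\<dots> \<le> (\<Sum>c\<in>Basis. norm v * (SUP x. \<bar>dderiv [c, b] f x\<bar>))"
        proof (rule sum_mono)
          fix c :: 'a assume c: "c \<in> Basis"
          show "\<bar>(v \<bullet> c) * dderiv [c, b] f ?y\<bar> \<le> norm v * (SUP x. \<bar>dderiv [c, b] f x\<bar>)"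
            unfolding abs_mult
            using Basis_le_norm[OF c, of v] test_le_sup[OF f, of "[c, b]" ?y] b c
            by (intro mult_mono) auto
        qed
        finally show ?thesis .
      qed
      show "\<bar>(v \<bullet> b) * (\<Sum>c\<in>Basis. (v \<bullet> c) * dderiv [c, b] f ?y)\<bar>
            \<le> norm v * (\<Sum>c\<in>Basis. norm v * (SUP x. \<bar>dderiv [c, b] f x\<bar>))"
        unfolding abs_mult
        using Basis_le_norm[OF b, of v] inner by (intro mult_mono) auto
    qed
    also have "\<dots> = norm v ^ 2 * (\<Sum>b\<in>Basis. \<Sum>c\<in>Basis. (SUP x. \<bar>dderiv [c, b] f x\<bar>))"
      by (simp add: sum_distrib_left power2_eq_square mult.assoc)
    also have "\<dots> \<le> norm v ^ 2 * Cm_seminorm 2 f"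
      using sum_pairs_le_Cm[OF f] by (intro mult_left_mono) auto
    finally show ?thesis .
  qed
  have "\<bar>f (z + 1 *\<^sub>R v) + f (z + (-1) *\<^sub>R v) - 2 * f (z + 0 *\<^sub>R v)\<bar> \<le> 2 * (norm v ^ 2 * Cm_seminorm 2 f)"
    using second_diff_real[where \<phi>="\<lambda>t. f (z + t *\<^sub>R v)", OF D1 D2 B] .
  then show ?thesis by simp
qed


lemma lborel_affine_unit:
  fixes x :: "'a::euclidean_space"
  assumes c: "c = 1 \<or> c = -1"
  shows "distr lborel borel (\<lambda>h. x + c *\<^sub>R h) = (lborel :: 'a measure)"
proof -
  have "c \<noteq> 0" "\<bar>c\<bar> = 1" using c by auto
  from lborel_affine[OF this(1), of x] this(2) show ?thesis by (simp add: density_1)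
qed

lemma shear_meas:
  "(\<lambda>z::('a::euclidean_space \<times> 'a). (fst z, fst z + c *\<^sub>R snd z)) \<in> lborel \<rightarrow>\<^sub>M lborel"
  unfolding measurable_lborel1 measurable_lborel2
  by (intro borel_measurable_continuous_onI continuous_intros)

lemma shear_nn:
  fixes g :: "('a::euclidean_space \<times> 'a) \<Rightarrow> ennreal"
  assumes c: "c = 1 \<or> c = -1" and g: "g \<in> borel_measurable lborel"
  shows "(\<integral>\<^sup>+ z. g (fst z, fst z + c *\<^sub>R snd z) \<partial>lborel) = (\<integral>\<^sup>+ z. g z \<partial>lborel)"
proof -
  have gm: "g \<in> borel_measurable (lborel \<Otimes>\<^sub>M lborel)" using g by (simp add: lborel_prod)
  have gm2: "(\<lambda>z. g (fst z, fst z + c *\<^sub>R snd z)) \<in> borel_measurable (lborel \<Otimes>\<^sub>M lborel)"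
    using measurable_comp[OF shear_meas g] by (simp add: lborel_prod o_def)
  have inner: "(\<integral>\<^sup>+ h. g (x, x + c *\<^sub>R h) \<partial>lborel) = (\<integral>\<^sup>+ y. g (x, y) \<partial>lborel)" for x :: 'a
  proof -
    have gx: "(\<lambda>y. g (x, y)) \<in> borel_measurable borel"
      using gm measurable_Pair2[OF gm, of x] by (simp add: measurable_lborel1)
    have "(\<integral>\<^sup>+ y. g (x, y) \<partial>lborel) = (\<integral>\<^sup>+ y. g (x, y) \<partial>distr lborel borel (\<lambda>h. x + c *\<^sub>R h))"
      by (simp add: lborel_affine_unit[OF c])
    also have "\<dots> = (\<integral>\<^sup>+ h. g (x, x + c *\<^sub>R h) \<partial>lborel)"
      by (rule nn_integral_distr) (auto simp: gx)
    finally show ?thesis by simp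
  qed
  have "(\<integral>\<^sup>+ z. g (fst z, fst z + c *\<^sub>R snd z) \<partial>lborel)
      = (\<integral>\<^sup>+ z. g (fst z, fst z + c *\<^sub>R snd z) \<partial>(lborel \<Otimes>\<^sub>M lborel))" by (simp add: lborel_prod)
  also have "\<dots> = (\<integral>\<^sup>+ x. \<integral>\<^sup>+ h. g (x, x + c *\<^sub>R h) \<partial>lborel \<partial>lborel)"
    using lborel.nn_integral_fst[OF gm2] by simp
  also have "\<dots> = (\<integral>\<^sup>+ x. \<integral>\<^sup>+ y. g (x, y) \<partial>lborel \<partial>lborel)" by (simp add: inner)
  also have "\<dots> = (\<integral>\<^sup>+ z. g z \<partial>(lborel \<Otimes>\<^sub>M lborel))"
    using lborel.nn_integral_fst[OF gm] by simp
  finally show ?thesis by (simp add: lborel_prod)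
qed

lemma shear_distr:
  assumes c: "c = 1 \<or> c = -1"
  shows "distr lborel lborel (\<lambda>z::('a::euclidean_space \<times> 'a). (fst z, fst z + c *\<^sub>R snd z)) = lborel"
proof (rule measure_eqI)
  show "sets (distr lborel lborel (\<lambda>z::('a \<times> 'a). (fst z, fst z + c *\<^sub>R snd z))) = sets lborel" by simp
  fix A assume A: "A \<in> sets (distr lborel lborel (\<lambda>z::('a \<times> 'a). (fst z, fst z + c *\<^sub>R snd z)))"
  then have A': "A \<in> sets lborel" by simp
  have "emeasure (distr lborel lborel (\<lambda>z::('a \<times> 'a). (fst z, fst z + c *\<^sub>R snd z))) A
      = emeasure lborel ((\<lambda>z::('a \<times> 'a). (fst z, fst z + c *\<^sub>R snd z)) -` A \<inter> space lborel)"
    by (rule emeasure_distr[OF shear_meas A'])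
  also have "\<dots> = (\<integral>\<^sup>+ z. indicator ((\<lambda>z::('a \<times> 'a). (fst z, fst z + c *\<^sub>R snd z)) -` A \<inter> space lborel) z \<partial>lborel)"
    by (rule nn_integral_indicator[symmetric]) (use measurable_sets[OF shear_meas A'] in auto)
  also have "\<dots> = (\<integral>\<^sup>+ z. indicator A (fst z, fst z + c *\<^sub>R snd z) \<partial>lborel)"
    by (intro nn_integral_cong) (auto simp: indicator_def)
  also have "\<dots> = (\<integral>\<^sup>+ z. indicator A z \<partial>lborel)"
    by (rule shear_nn[OF c]) (use A' in simp)
  also have "\<dots> = emeasure lborel A" using A' by simp
  finally show "emeasure (distr lborel lborel (\<lambda>z::('a \<times> 'a). (fst z, fst z + c *\<^sub>R snd z))) A = emeasure lborel A" .
qed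

lemma shear_integral:
  fixes f :: "('a::euclidean_space \<times> 'a) \<Rightarrow> real"
  assumes c: "c = 1 \<or> c = -1" and f: "f \<in> borel_measurable lborel"
  shows "integral\<^sup>L lborel f = (\<integral> z. f (fst z, fst z + c *\<^sub>R snd z) \<partial>lborel)"
    and "integrable lborel f \<longleftrightarrow> integrable lborel (\<lambda>z. f (fst z, fst z + c *\<^sub>R snd z))"
proof -
  show "integral\<^sup>L lborel f = (\<integral> z. f (fst z, fst z + c *\<^sub>R snd z) \<partial>lborel)"
    using integral_distr[OF shear_meas f, of c] unfolding shear_distr[OF c] .
  show "integrable lborel f \<longleftrightarrow> integrable lborel (\<lambda>z. f (fst z, fst z + c *\<^sub>R snd z))"
    using integrable_distr_eq[OF shear_meas f, of c] unfolding shear_distr[OF c] .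
qed

lemma nn_integral_prod_split:
  fixes a b :: "'a::euclidean_space \<Rightarrow> ennreal"
  assumes a: "a \<in> borel_measurable borel" and b: "b \<in> borel_measurable borel"
  shows "(\<integral>\<^sup>+ z. a (fst z) * b (snd z) \<partial>(lborel :: ('a \<times> 'a) measure))
       = (\<integral>\<^sup>+ x. a x \<partial>lborel) * (\<integral>\<^sup>+ h. b h \<partial>lborel)"
proof -
  have m: "(\<lambda>z. a (fst z) * b (snd z)) \<in> borel_measurable (lborel \<Otimes>\<^sub>M lborel)"
    using a b by measurable
  have "(\<integral>\<^sup>+ z. a (fst z) * b (snd z) \<partial>(lborel :: ('a \<times> 'a) measure))
      = (\<integral>\<^sup>+ z. a (fst z) * b (snd z) \<partial>(lborel \<Otimes>\<^sub>M lborel))" by (simp add: lborel_prod)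
  also have "\<dots> = (\<integral>\<^sup>+ x. \<integral>\<^sup>+ h. a x * b h \<partial>lborel \<partial>lborel)"
    using lborel.nn_integral_fst[OF m] by simp
  also have "\<dots> = (\<integral>\<^sup>+ x. a x * (\<integral>\<^sup>+ h. b h \<partial>lborel) \<partial>lborel)"
    using b by (subst nn_integral_cmult) auto
  also have "\<dots> = (\<integral>\<^sup>+ x. a x \<partial>lborel) * (\<integral>\<^sup>+ h. b h \<partial>lborel)"
    using a by (subst nn_integral_multc) auto
  finally show ?thesis .
qed


lemma meas_pair: "f \<in> borel_measurable (lborel \<Otimes>\<^sub>M lborel) \<Longrightarrow> f \<in> borel_measurable (lborel :: ('a::euclidean_space \<times> 'b::euclidean_space) measure)"
  by (simp add: lborel_prod)

lemma test_meas:
  fixes \<Phi> :: "('a::euclidean_space \<times> 'a) \<Rightarrow> real"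
  assumes "test_fun \<Phi>"
  shows "\<Phi> \<in> borel_measurable (lborel \<Otimes>\<^sub>M lborel)"
proof -
  have "\<And>y. \<Phi> differentiable (at y)" using assms smooth_diff[of \<Phi> "[]"] by (simp add: test_fun_def)
  then have "continuous_on UNIV \<Phi>"
    by (intro continuous_at_imp_continuous_on ballI differentiable_imp_continuous_within) auto
  then have "\<Phi> \<in> borel_measurable borel" by (rule borel_measurable_continuous_onI)
  then show ?thesis by (simp add: lborel_prod)
qed

lemma Cm_nonneg: "test_fun f \<Longrightarrow> 0 \<le> Cm_seminorm m f"
  using test_abs_le_Cm[of f 0 m] by linarith

lemma Phi_bound:
  fixes \<Phi> :: "('a::euclidean_space \<times> 'a) \<Rightarrow> real"
  assumes f: "test_fun \<Phi>" and K: "tsupport \<Phi> \<subseteq> K"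
  shows "\<bar>\<Phi> (x, y)\<bar> \<le> indicator (fst ` K) x * Cm_seminorm 2 \<Phi>"
proof (cases "(x, y) \<in> tsupport \<Phi>")
  case True
  then have "x \<in> fst ` K" using K by force
  then show ?thesis using test_abs_le_Cm[OF f, of "(x,y)" 2] by simp
next
  case False
  then have "\<Phi> (x, y) = 0" using dderiv_outside[OF False, of "[]"] by simp
  then show ?thesis using Cm_nonneg[OF f, of 2] by simp
qed

lemma integrable_prod_fun:
  fixes a b :: "'a::euclidean_space \<Rightarrow> real"
  assumes a: "a \<in> borel_measurable borel" and b: "b \<in> borel_measurable borel"
    and a0: "\<And>x. 0 \<le> a x" and b0: "\<And>x. 0 \<le> b x"
    and ai: "(\<integral>\<^sup>+ x. ennreal (a x) \<partial>lborel) < \<infinity>" and bi: "(\<integral>\<^sup>+ x. ennreal (b x) \<partial>lborel) < \<infinity>"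
  shows "integrable (lborel :: ('a \<times> 'a) measure) (\<lambda>z. a (fst z) * b (snd z))"
proof (rule integrableI_bounded)
  have [measurable]: "a \<in> borel_measurable lborel" "b \<in> borel_measurable lborel" using a b by auto
  show "(\<lambda>z. a (fst z) * b (snd z)) \<in> borel_measurable lborel"
    by (rule meas_pair) measurable
  have "(\<integral>\<^sup>+ z. ennreal (norm (a (fst z) * b (snd z))) \<partial>(lborel :: ('a \<times> 'a) measure))
      = (\<integral>\<^sup>+ z. ennreal (a (fst z)) * ennreal (b (snd z)) \<partial>lborel)"
    using a0 b0 by (intro nn_integral_cong) (simp add: ennreal_mult abs_mult)
  also have "\<dots> = (\<integral>\<^sup>+ x. ennreal (a x) \<partial>lborel) * (\<integral>\<^sup>+ h. ennreal (b h) \<partial>lborel)"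
    by (rule nn_integral_prod_split) (use a b in auto)
  also have "\<dots> < \<infinity>" using ai bi by (simp add: ennreal_mult_less_top)
  finally show "(\<integral>\<^sup>+ z. ennreal (norm (a (fst z) * b (snd z))) \<partial>(lborel :: ('a \<times> 'a) measure)) < \<infinity>" .
qed

lemma compact_ind_finite:
  fixes P :: "'a::euclidean_space set"
  assumes "compact P"
  shows "(\<integral>\<^sup>+ x. ennreal (indicator P x) \<partial>lborel) < \<infinity>"
proof -
  have "P \<in> sets lborel" using assms by (simp add: compact_imp_closed borel_closed)
  then have "(\<integral>\<^sup>+ x. ennreal (indicator P x) \<partial>lborel) = emeasure lborel P"
    using nn_integral_indicator[of P lborel] by (simp add: ennreal_indicator)
  also have "\<dots> < \<infinity>" using assms by (intro emeasure_bounded_finite compact_imp_bounded)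
  finally show ?thesis .
qed

lemma far_eps_finite:
  fixes a \<epsilon> :: real
  assumes a: "DIM('a) < a" and e: "\<epsilon> > 0"
  shows "(\<integral>\<^sup>+ h. ennreal (indicator {h::'a::euclidean_space. \<epsilon> \<le> norm h} h / norm h powr a) \<partial>lborel) < \<infinity>"
proof -
  have "(\<integral>\<^sup>+ h. ennreal (indicator {h::'a. \<epsilon> \<le> norm h} h / norm h powr a) \<partial>lborel)
     \<le> (\<integral>\<^sup>+ h. indicator {h::'a. 1 \<le> norm h} h * ennreal (1 / norm h powr a)
              + ennreal (1 / \<epsilon> powr a) * indicator (ball (0::'a) 1) h \<partial>lborel)"
  proof (intro nn_integral_mono)
    fix h :: 'a
    show "ennreal (indicator {h::'a. \<epsilon> \<le> norm h} h / norm h powr a)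
       \<le> indicator {h::'a. 1 \<le> norm h} h * ennreal (1 / norm h powr a)
              + ennreal (1 / \<epsilon> powr a) * indicator (ball (0::'a) 1) h"
    proof (cases "\<epsilon> \<le> norm h")
      case False then show ?thesis by simp
    next
      case True
      show ?thesis
      proof (cases "1 \<le> norm h")
        case True then show ?thesis by (simp add: indicator_def)
      next
        case False
        have "\<epsilon> powr a \<le> norm h powr a" using \<open>\<epsilon> \<le> norm h\<close> e a by (intro powr_mono2) auto
        moreover have "norm h powr a > 0" "\<epsilon> powr a > 0" using e \<open>\<epsilon> \<le> norm h\<close> by auto
        ultimately have "1 / norm h powr a \<le> 1 / \<epsilon> powr a"
          by (intro divide_left_mono) auto
        then show ?thesis using False True by (simp add: indicator_def ennreal_leI)
      qed
    qed
  qed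
  also have "\<dots> = (\<integral>\<^sup>+ h. indicator {h::'a. 1 \<le> norm h} h * ennreal (1 / norm h powr a) \<partial>lborel)
       + ennreal (1 / \<epsilon> powr a) * emeasure lborel (ball (0::'a) 1)"
  proof -
    have m1: "(\<lambda>h. indicator {h::'a. 1 \<le> norm h} h * ennreal (1 / norm h powr a)) \<in> borel_measurable lborel"
      by measurable
    have m2: "(\<lambda>h. ennreal (1 / \<epsilon> powr a) * indicator (ball (0::'a) 1) h) \<in> borel_measurable lborel"
      by (intro borel_measurable_times_ennreal borel_measurable_const borel_measurable_indicator) simp
    show ?thesis unfolding nn_integral_add[OF m1 m2]
      by (subst nn_integral_cmult_indicator) auto
  qed
  also have "\<dots> < \<infinity>"
  proof -
    have "emeasure lborel (ball (0::'a) 1) < \<infinity>" by (rule emeasure_bounded_finite) simp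
    then have "ennreal (1 / \<epsilon> powr a) * emeasure lborel (ball (0::'a) 1) < \<infinity>"
      unfolding infinity_ennreal_def ennreal_mult_less_top by simp
    then show ?thesis using radial_far[OF a] unfolding infinity_ennreal_def ennreal_add_less_top by simp
  qed
  finally show ?thesis .
qed


definition Hf :: "real \<Rightarrow> ((real^'n) \<times> (real^'n) \<Rightarrow> real) \<Rightarrow> (real^'n) \<times> (real^'n) \<Rightarrow> real" where
  "Hf s \<Phi> z = (\<Phi> (fst z, fst z + snd z) + \<Phi> (fst z, fst z - snd z) - 2 * \<Phi> (fst z, fst z))
     / (2 * norm (snd z) powr (real CARD('n) + 2 * s))"

definition g0 :: "real \<Rightarrow> (real^'n) \<Rightarrow> real" where
  "g0 s h = indicator {h. norm h < 1} h * (norm h ^ 2 / norm h powr (real CARD('n) + 2 * s))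
     + indicator {h. 1 \<le> norm h} h * (2 / norm h powr (real CARD('n) + 2 * s))"

lemma ennreal_two_div: "0 \<le> (y::real) \<Longrightarrow> ennreal (2 / y) = 2 * ennreal (1 / y)"
  using ennreal_mult[of 2 "1 / y"] by simp

lemma g0_nonneg: "0 \<le> g0 s h"
  by (simp add: g0_def)

lemma g0_meas: "g0 s \<in> borel_measurable borel"
  unfolding g0_def[abs_def] by measurable

lemma g0_finite:
  assumes s0: "0 < s" and s1: "s < 1"
  shows "(\<integral>\<^sup>+ h. ennreal (g0 s (h::real^'n)) \<partial>lborel) < \<infinity>"
proof -
  define p where "p = real CARD('n) + 2 * s"
  have m1: "(\<lambda>h::real^'n. indicator {h::real^'n. norm h < 1} h * ennreal (norm h ^ 2 / norm h powr p)) \<in> borel_measurable lborel"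
    by measurable
  have m2: "(\<lambda>h::real^'n. (2::ennreal) * (indicator {h::real^'n. 1 \<le> norm h} h * ennreal (1 / norm h powr p))) \<in> borel_measurable lborel"
    by measurable
  have "(\<integral>\<^sup>+ h. ennreal (g0 s (h::real^'n)) \<partial>lborel)
     = (\<integral>\<^sup>+ h. indicator {h::real^'n. norm h < 1} h * ennreal (norm h ^ 2 / norm h powr p)
          + (2::ennreal) * (indicator {h::real^'n. 1 \<le> norm h} h * ennreal (1 / norm h powr p)) \<partial>lborel)"
    by (intro nn_integral_cong) (auto simp: g0_def p_def indicator_def ennreal_two_div)
  also have "\<dots> = (\<integral>\<^sup>+ h. indicator {h::real^'n. norm h < 1} h * ennreal (norm h ^ 2 / norm h powr p) \<partial>lborel)
          + (2::ennreal) * (\<integral>\<^sup>+ h. indicator {h::real^'n. 1 \<le> norm h} h * ennreal (1 / norm h powr p) \<partial>lborel)"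
    unfolding nn_integral_add[OF m1 m2] by (subst nn_integral_cmult) auto
  also have "\<dots> < \<infinity>"
  proof -
    have a: "(\<integral>\<^sup>+ h. indicator {h::real^'n. norm h < 1} h * ennreal (norm h ^ 2 / norm h powr p) \<partial>lborel) < \<infinity>"
      using radial_near[where 'a="real^'n", of p] s0 s1 by (simp add: p_def)
    have b: "(\<integral>\<^sup>+ h. indicator {h::real^'n. 1 \<le> norm h} h * ennreal (1 / norm h powr p) \<partial>lborel) < \<infinity>"
      using radial_far[where 'a="real^'n", of p] s0 by (simp add: p_def)
    show ?thesis using a b
      unfolding infinity_ennreal_def ennreal_add_less_top ennreal_mult_less_top by simp
  qed
  finally show ?thesis .
qed

lemma Hf_bound:
  fixes \<Phi> :: "(real^'n) \<times> (real^'n) \<Rightarrow> real"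
  assumes s0: "0 < s" and f: "test_fun \<Phi>" and K: "tsupport \<Phi> \<subseteq> K"
  shows "\<bar>Hf s \<Phi> z\<bar> \<le> indicator (fst ` K) (fst z) * (Cm_seminorm 2 \<Phi> * g0 s (snd z))"
proof -
  obtain x h where z: "z = (x, h)" by (cases z)
  define N where "N = Cm_seminorm 2 \<Phi>"
  define p where "p = real CARD('n) + 2 * s"
  define d where "d = norm h powr p"
  have N0: "0 \<le> N" using Cm_nonneg[OF f] by (simp add: N_def)
  have g00: "0 \<le> g0 s h" by (rule g0_nonneg)
  have Hz: "Hf s \<Phi> z = (\<Phi> (x, x + h) + \<Phi> (x, x - h) - 2 * \<Phi> (x, x)) / (2 * d)"
    by (simp add: Hf_def z d_def p_def)
  show ?thesis
  proof (cases "x \<in> fst ` K")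
    case False
    have "\<Phi> (x, y) = 0" for y using Phi_bound[OF f K, of x y] False by simp
    then show ?thesis using False by (simp add: z Hf_def)
  next
    case xP: True
    show ?thesis
    proof (cases "h = 0")
      case True
      then show ?thesis using xP N0 g00 by (simp add: z Hf_def N_def)
    next
      case False
      have d0: "d > 0" using False by (simp add: d_def)
      have b1: "\<bar>\<Phi> (x, x + h) + \<Phi> (x, x - h) - 2 * \<Phi> (x, x)\<bar> \<le> 2 * (norm h ^ 2 * N)"
        using second_diff_test[OF f, of "(x, x)" "(0, h)"] by (simp add: N_def norm_Pair)
      have b2: "\<bar>\<Phi> (x, x + h) + \<Phi> (x, x - h) - 2 * \<Phi> (x, x)\<bar> \<le> 4 * N"
        using test_abs_le_Cm[OF f, of "(x, x + h)" 2] test_abs_le_Cm[OF f, of "(x, x - h)" 2]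
          test_abs_le_Cm[OF f, of "(x, x)" 2] by (simp add: N_def)
      have "\<bar>Hf s \<Phi> z\<bar> = \<bar>\<Phi> (x, x + h) + \<Phi> (x, x - h) - 2 * \<Phi> (x, x)\<bar> / (2 * d)"
        using d0 by (simp add: Hz)
      also have "\<dots> \<le> N * g0 s h"
      proof (cases "norm h < 1")
        case True
        have g: "g0 s h = norm h ^ 2 / d" using True by (simp add: g0_def d_def p_def)
        have "\<bar>\<Phi> (x, x + h) + \<Phi> (x, x - h) - 2 * \<Phi> (x, x)\<bar> / (2 * d) \<le> (2 * (norm h ^ 2 * N)) / (2 * d)"
          using b1 d0 by (intro divide_right_mono) auto
        also have "\<dots> = N * g0 s h" using d0 by (simp add: g)
        finally show ?thesis .
      next
        case False
        have g: "g0 s h = 2 / d" using False by (simp add: g0_def d_def p_def)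
        have "\<bar>\<Phi> (x, x + h) + \<Phi> (x, x - h) - 2 * \<Phi> (x, x)\<bar> / (2 * d) \<le> (4 * N) / (2 * d)"
          using b2 d0 by (intro divide_right_mono) auto
        also have "\<dots> = N * g0 s h" using d0 by (simp add: g)
        finally show ?thesis .
      qed
      finally show ?thesis using xP by (simp add: z N_def)
    qed
  qed
qed

lemma Hf_meas:
  fixes \<Phi> :: "(real^'n) \<times> (real^'n) \<Rightarrow> real"
  assumes f: "test_fun \<Phi>"
  shows "Hf s \<Phi> \<in> borel_measurable lborel"
proof -
  have [measurable]: "\<Phi> \<in> borel_measurable (lborel \<Otimes>\<^sub>M lborel)" by (rule test_meas[OF f])
  show ?thesis unfolding Hf_def[abs_def] by (rule meas_pair) measurable
qed

lemma kernel_meas: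
  fixes \<Phi> :: "(real^'n) \<times> (real^'n) \<Rightarrow> real"
  assumes f: "test_fun \<Phi>"
  shows "kernel_S s \<Phi> \<in> borel_measurable lborel"
proof -
  have [measurable]: "\<Phi> \<in> borel_measurable (lborel \<Otimes>\<^sub>M lborel)" by (rule test_meas[OF f])
  show ?thesis unfolding kernel_S_def[abs_def] by (rule meas_pair) measurable
qed

lemma Bc_sets: "Bc \<epsilon> \<in> sets (lborel :: ((real^'n) \<times> (real^'n)) measure)"
proof -
  have "closed (Bc \<epsilon> :: ((real^'n) \<times> (real^'n)) set)"
    unfolding Bc_def by (intro closed_Collect_le continuous_intros)
  then show ?thesis by (simp add: borel_closed)
qed

lemma kernel_shear:
  fixes \<Phi> :: "(real^'n) \<times> (real^'n) \<Rightarrow> real"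
  assumes c: "c = 1 \<or> c = -1"
  shows "kernel_S s \<Phi> (x, x + c *\<^sub>R h) = (\<Phi> (x, x + c *\<^sub>R h) - \<Phi> (x, x)) / norm h powr (real CARD('n) + 2 * s)"
    and "indicator (Bc \<epsilon>) (x, x + c *\<^sub>R h) = (indicator {h. \<epsilon> \<le> norm h} h :: real)"
  using c by (auto simp: kernel_S_def Bc_def dist_norm indicator_def)


lemma fst_compact: "compact (K :: ('a::euclidean_space \<times> 'b::euclidean_space) set) \<Longrightarrow> compact (fst ` K)"
  by (intro compact_continuous_image continuous_intros)

lemma ks_plus:
  fixes \<Phi> :: "(real^'n) \<times> (real^'n) \<Rightarrow> real"
  shows "kernel_S s \<Phi> (x, x + h) = (\<Phi> (x, x + h) - \<Phi> (x, x)) / norm h powr (real CARD('n) + 2 * s)"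
    and "kernel_S s \<Phi> (x, x - h) = (\<Phi> (x, x - h) - \<Phi> (x, x)) / norm h powr (real CARD('n) + 2 * s)"
    and "indicator (Bc \<epsilon>) (x, x + h) = (indicator {h. \<epsilon> \<le> norm h} h :: real)"
    and "indicator (Bc \<epsilon>) (x, x - h) = (indicator {h. \<epsilon> \<le> norm h} h :: real)"
  by (auto simp: kernel_S_def Bc_def dist_norm indicator_def)

lemma set_int:
  fixes \<Phi> :: "(real^'n) \<times> (real^'n) \<Rightarrow> real"
  assumes s0: "0 < s" and f: "test_fun \<Phi>" and e: "\<epsilon> > 0"
  shows "set_integrable lborel (Bc \<epsilon>) (kernel_S s \<Phi>)"
proof -
  define K where "K = tsupport \<Phi>"
  have Kc: "compact K" using f by (simp add: test_fun_def K_def)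
  define P where "P = fst ` K"
  have Pc: "compact P" unfolding P_def by (rule fst_compact[OF Kc])
  define N where "N = Cm_seminorm 2 \<Phi>"
  have N0: "0 \<le> N" using Cm_nonneg[OF f] by (simp add: N_def)
  define p where "p = real CARD('n) + 2 * s"
  define q where "q h = indicator {h. \<epsilon> \<le> norm h} h / norm h powr p" for h :: "real^'n"
  have q0: "0 \<le> q h" for h by (simp add: q_def)
  have qm: "q \<in> borel_measurable borel" unfolding q_def[abs_def] by measurable
  define F where "F z = indicator (Bc \<epsilon>) z *\<^sub>R kernel_S s \<Phi> z" for z
  have fm: "F \<in> borel_measurable lborel"
    unfolding F_def[abs_def] using Bc_sets kernel_meas[OF f] by measurable
  have "integrable lborel (\<lambda>z. F (fst z, fst z + 1 *\<^sub>R snd z))"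
  proof (rule Bochner_Integration.integrable_bound)
    show "integrable lborel (\<lambda>z. indicator P (fst z) * (2 * N * q (snd z)))"
    proof (rule integrable_prod_fun)
      show "indicator P \<in> borel_measurable borel"
        using Pc by (intro borel_measurable_indicator) (simp add: compact_imp_closed borel_closed)
      show "(\<lambda>h. 2 * N * q h) \<in> borel_measurable borel" using qm by measurable
      show "0 \<le> (indicator P x :: real)" for x :: "real^'n" by simp
      show "0 \<le> 2 * N * q x" for x using N0 q0 by simp
      show "(\<integral>\<^sup>+ x. ennreal (indicator P x) \<partial>lborel) < \<infinity>" by (rule compact_ind_finite[OF Pc])
      have "(\<integral>\<^sup>+ x. ennreal (2 * N * q x) \<partial>lborel) = ennreal (2 * N) * (\<integral>\<^sup>+ x. ennreal (q x) \<partial>lborel)"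
        using N0 q0 qm by (subst nn_integral_cmult[symmetric]) (auto simp: ennreal_mult)
      also have "\<dots> < \<infinity>"
      proof -
        have "(\<integral>\<^sup>+ x. ennreal (q x) \<partial>lborel) < \<infinity>"
          unfolding q_def using far_eps_finite[where 'a="real^'n", of p \<epsilon>] s0 e by (simp add: p_def)
        then show ?thesis unfolding infinity_ennreal_def ennreal_mult_less_top by simp
      qed
      finally show "(\<integral>\<^sup>+ x. ennreal (2 * N * q x) \<partial>lborel) < \<infinity>" .
    qed
    show "(\<lambda>z. F (fst z, fst z + 1 *\<^sub>R snd z)) \<in> borel_measurable lborel"
      using measurable_comp[OF shear_meas fm, of 1] by (simp add: o_def)
    show "AE z in lborel. norm (F (fst z, fst z + 1 *\<^sub>R snd z)) \<le> norm (indicator P (fst z) * (2 * N * q (snd z)))"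
    proof (rule AE_I2)
      fix z :: "(real^'n) \<times> (real^'n)"
      obtain x h where z: "z = (x, h)" by (cases z)
      have Fz: "F (fst z, fst z + 1 *\<^sub>R snd z) = indicator {h. \<epsilon> \<le> norm h} h * ((\<Phi> (x, x + h) - \<Phi> (x, x)) / norm h powr p)"
        by (simp add: F_def z p_def ks_plus)
      have rhs0: "0 \<le> indicator P x * (2 * N * q h)" using N0 q0 by simp
      show "norm (F (fst z, fst z + 1 *\<^sub>R snd z)) \<le> norm (indicator P (fst z) * (2 * N * q (snd z)))"
      proof (cases "\<epsilon> \<le> norm h")
        case False
        then show ?thesis unfolding Fz using rhs0 by (simp add: z)
      next
        case True
        then have h0: "norm h > 0" using e by linarith
        then have d0: "norm h powr p > 0" by simp
        have "\<bar>\<Phi> (x, x + h) - \<Phi> (x, x)\<bar> \<le> 2 * (indicator P x * N)"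
          using Phi_bound[OF f, of K x "x + h"] Phi_bound[OF f, of K x x]
          by (simp add: K_def P_def N_def)
        then have "\<bar>\<Phi> (x, x + h) - \<Phi> (x, x)\<bar> / norm h powr p \<le> 2 * (indicator P x * N) / norm h powr p"
          using d0 by (intro divide_right_mono) auto
        moreover have "\<bar>indicator P x * (2 * N)\<bar> = 2 * (indicator P x * N)" using N0 by simp
        ultimately show ?thesis unfolding Fz using True rhs0 by (simp add: z q_def)
      qed
    qed
  qed
  then have "integrable lborel F" using shear_integral(2)[of 1 F, OF _ fm] by simp
  then show ?thesis
    unfolding set_integrable_def by (simp add: F_def[abs_def])
qed

lemma Hf_sym:
  fixes \<Phi> :: "(real^'n) \<times> (real^'n) \<Rightarrow> real"
  shows "(indicator (Bc \<epsilon>) (x, x + 1 *\<^sub>R h) *\<^sub>R kernel_S s \<Phi> (x, x + 1 *\<^sub>R h)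
        + indicator (Bc \<epsilon>) (x, x + (-1) *\<^sub>R h) *\<^sub>R kernel_S s \<Phi> (x, x + (-1) *\<^sub>R h)) / 2
       = indicator {h. \<epsilon> \<le> norm h} h * Hf s \<Phi> (x, h)"
proof -
  define d where "d = norm h powr (real CARD('n) + 2 * s)"
  have "(indicator (Bc \<epsilon>) (x, x + 1 *\<^sub>R h) *\<^sub>R kernel_S s \<Phi> (x, x + 1 *\<^sub>R h)
        + indicator (Bc \<epsilon>) (x, x + (-1) *\<^sub>R h) *\<^sub>R kernel_S s \<Phi> (x, x + (-1) *\<^sub>R h)) / 2
      = (indicator {h. \<epsilon> \<le> norm h} h * ((\<Phi> (x, x + h) - \<Phi> (x, x)) / d)
        + indicator {h. \<epsilon> \<le> norm h} h * ((\<Phi> (x, x - h) - \<Phi> (x, x)) / d)) / 2"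
    by (simp add: d_def ks_plus)
  also have "\<dots> = indicator {h. \<epsilon> \<le> norm h} h * ((\<Phi> (x, x + h) + \<Phi> (x, x - h) - 2 * \<Phi> (x, x)) / (2 * d))"
  proof (cases "d = 0")
    case True then show ?thesis by simp
  next
    case False then show ?thesis by (simp add: field_simps)
  qed
  also have "\<dots> = indicator {h. \<epsilon> \<le> norm h} h * Hf s \<Phi> (x, h)"
    by (simp add: Hf_def d_def)
  finally show ?thesis .
qed

lemma trunc_eq:
  fixes \<Phi> :: "(real^'n) \<times> (real^'n) \<Rightarrow> real"
  assumes s0: "0 < s" and f: "test_fun \<Phi>" and e: "\<epsilon> > 0"
  shows "trunc_S s \<Phi> \<epsilon> = (\<integral> z. indicator {h. \<epsilon> \<le> norm h} (snd z) * Hf s \<Phi> z \<partial>lborel)"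
proof -
  define F where "F z = indicator (Bc \<epsilon>) z *\<^sub>R kernel_S s \<Phi> z" for z
  have fm: "F \<in> borel_measurable lborel"
    unfolding F_def[abs_def] using Bc_sets kernel_meas[OF f] by measurable
  have si: "integrable lborel F" using set_int[OF s0 f e] by (simp add: set_integrable_def F_def[abs_def])
  have i1: "integrable lborel (\<lambda>z. F (fst z, fst z + 1 *\<^sub>R snd z))"
    using si shear_integral(2)[of 1 F, OF _ fm] by simp
  have i2: "integrable lborel (\<lambda>z. F (fst z, fst z + (-1) *\<^sub>R snd z))"
    using si shear_integral(2)[of "-1" F, OF _ fm] by simp
  have e1: "trunc_S s \<Phi> \<epsilon> = (\<integral> z. F (fst z, fst z + 1 *\<^sub>R snd z) \<partial>lborel)"
    unfolding trunc_S_def set_lebesgue_integral_def F_def[symmetric]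
    using shear_integral(1)[of 1 F, OF _ fm] by simp
  have e2: "trunc_S s \<Phi> \<epsilon> = (\<integral> z. F (fst z, fst z + (-1) *\<^sub>R snd z) \<partial>lborel)"
    unfolding trunc_S_def set_lebesgue_integral_def F_def[symmetric]
    using shear_integral(1)[of "-1" F, OF _ fm] by simp
  have "trunc_S s \<Phi> \<epsilon> = ((\<integral> z. F (fst z, fst z + 1 *\<^sub>R snd z) \<partial>lborel)
                        + (\<integral> z. F (fst z, fst z + (-1) *\<^sub>R snd z) \<partial>lborel)) / 2"
    using e1 e2 by simp
  also have "\<dots> = (\<integral> z. (F (fst z, fst z + 1 *\<^sub>R snd z) + F (fst z, fst z + (-1) *\<^sub>R snd z)) / 2 \<partial>lborel)"
    using Bochner_Integration.integral_add[OF i1 i2] by simp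
  also have "\<dots> = (\<integral> z. indicator {h. \<epsilon> \<le> norm h} (snd z) * Hf s \<Phi> z \<partial>lborel)"
  proof (intro Bochner_Integration.integral_cong refl)
    fix z :: "(real^'n) \<times> (real^'n)"
    obtain x h where z: "z = (x, h)" by (cases z)
    show "(F (fst z, fst z + 1 *\<^sub>R snd z) + F (fst z, fst z + (-1) *\<^sub>R snd z)) / 2
        = indicator {h. \<epsilon> \<le> norm h} (snd z) * Hf s \<Phi> z"
      using Hf_sym[of \<epsilon> x h s \<Phi>] unfolding z F_def by simp
  qed
  finally show ?thesis .
qed


lemma core:
  fixes \<Phi> :: "(real^'n) \<times> (real^'n) \<Rightarrow> real"
  assumes s0: "0 < s" and s1: "s < 1" and f: "test_fun \<Phi>" and Kc: "compact K" and K: "tsupport \<Phi> \<subseteq> K"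
  shows "(trunc_S s \<Phi> \<longlongrightarrow> integral\<^sup>L lborel (Hf s \<Phi>)) (at_right 0)"
    and "\<bar>integral\<^sup>L lborel (Hf s \<Phi>)\<bar> \<le> (\<integral> z. indicator (fst ` K) (fst z) * g0 s (snd (z::(real^'n) \<times> (real^'n))) \<partial>lborel) * Cm_seminorm 2 \<Phi>"
proof -
  define P where "P = fst ` K"
  have Pc: "compact P" unfolding P_def by (rule fst_compact[OF Kc])
  define N where "N = Cm_seminorm 2 \<Phi>"
  have N0: "0 \<le> N" using Cm_nonneg[OF f] by (simp add: N_def)
  define w where "w z = indicator P (fst z) * (N * g0 s (snd z))" for z :: "(real^'n) \<times> (real^'n)"
  have w0: "0 \<le> w z" for z using N0 g0_nonneg[of s "snd z"] by (simp add: w_def)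
  have Pm: "indicator P \<in> borel_measurable borel"
    using Pc by (intro borel_measurable_indicator) (simp add: compact_imp_closed borel_closed)
  have wi: "integrable lborel w"
    unfolding w_def
  proof (rule integrable_prod_fun)
    show "indicator P \<in> borel_measurable borel" by (rule Pm)
    show "(\<lambda>h::real^'n. N * g0 s h) \<in> borel_measurable borel" using g0_meas by measurable
    show "0 \<le> (indicator P x :: real)" for x :: "real^'n" by simp
    show "0 \<le> N * g0 s x" for x :: "real^'n" using N0 g0_nonneg[of s x] by simp
    show "(\<integral>\<^sup>+ x. ennreal (indicator P x) \<partial>lborel) < \<infinity>" by (rule compact_ind_finite[OF Pc])
    have gm [measurable]: "g0 s \<in> borel_measurable (lborel :: (real^'n) measure)" using g0_meas by simp
    have "(\<integral>\<^sup>+ x. ennreal (N * g0 s (x::real^'n)) \<partial>lborel) = (\<integral>\<^sup>+ x. ennreal N * ennreal (g0 s (x::real^'n)) \<partial>lborel)"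
      by (intro nn_integral_cong) (simp add: ennreal_mult N0 g0_nonneg)
    also have "\<dots> = ennreal N * (\<integral>\<^sup>+ x. ennreal (g0 s (x::real^'n)) \<partial>lborel)"
      by (rule nn_integral_cmult) measurable
    also have "\<dots> < \<infinity>"
      using g0_finite[where 'n='n, OF s0 s1] unfolding infinity_ennreal_def ennreal_mult_less_top by simp
    finally show "(\<integral>\<^sup>+ x. ennreal (N * g0 s (x::real^'n)) \<partial>lborel) < \<infinity>" .
  qed
  have wm: "w \<in> borel_measurable lborel" using wi by (rule borel_measurable_integrable)
  have Hm: "Hf s \<Phi> \<in> borel_measurable lborel" by (rule Hf_meas[OF f])
  have Hb: "\<bar>Hf s \<Phi> z\<bar> \<le> w z" for z
    using Hf_bound[OF s0 f K, of z] by (simp add: w_def P_def N_def)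
  have Hi: "integrable lborel (Hf s \<Phi>)"
    by (rule Bochner_Integration.integrable_bound[OF wi Hm]) (use Hb w0 in auto)
  have Hm2 [measurable]: "Hf s \<Phi> \<in> borel_measurable (lborel \<Otimes>\<^sub>M lborel)" using Hm by (simp add: lborel_prod)
  define S where "S t z = indicator {h. inverse t \<le> norm h} (snd z) * Hf s \<Phi> z" for t :: real and z :: "(real^'n) \<times> (real^'n)"
  have Sm: "S t \<in> borel_measurable lborel" for t
    unfolding S_def by (rule meas_pair) measurable
  have lim: "((\<lambda>t. integral\<^sup>L lborel (S t)) \<longlongrightarrow> integral\<^sup>L lborel (Hf s \<Phi>)) at_top"
  proof (rule integral_dominated_convergence_at_top[OF Hm Sm wi])
    show "AE z in lborel. ((\<lambda>t. S t z) \<longlongrightarrow> Hf s \<Phi> z) at_top"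
    proof (rule AE_I2)
      fix z :: "(real^'n) \<times> (real^'n)"
      show "((\<lambda>t. S t z) \<longlongrightarrow> Hf s \<Phi> z) at_top"
      proof (cases "snd z = 0")
        case True
        then have "Hf s \<Phi> z = 0" by (simp add: Hf_def)
        then have "S t z = Hf s \<Phi> z" for t by (simp add: S_def)
        then show ?thesis by simp
      next
        case False
        then have hp: "norm (snd z) > 0" by simp
        have "eventually (\<lambda>t. S t z = Hf s \<Phi> z) at_top"
          using eventually_gt_at_top[of "1 / norm (snd z)"]
        proof eventually_elim
          case (elim t)
          then have "t > 0" using hp by (smt (verit) divide_pos_pos)
          then have "inverse t \<le> norm (snd z)" using elim hp by (simp add: field_simps)
          then show ?case by (simp add: S_def)
        qed
        then show ?thesis by (rule tendsto_eventually)
      qed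
    qed
    show "\<forall>\<^sub>F t in at_top. AE z in lborel. norm (S t z) \<le> w z"
    proof (intro always_eventually allI AE_I2)
      fix t z
      show "norm (S t z) \<le> w z" using Hb[of z] w0[of z] by (simp add: S_def indicator_def)
    qed
  qed
  have ev: "eventually (\<lambda>t. trunc_S s \<Phi> (inverse t) = integral\<^sup>L lborel (S t)) at_top"
    using eventually_gt_at_top[of 0]
  proof eventually_elim
    case (elim t)
    then show ?case using trunc_eq[OF s0 f, of "inverse t"] by (simp add: S_def[abs_def])
  qed
  have "((\<lambda>t. trunc_S s \<Phi> (inverse t)) \<longlongrightarrow> integral\<^sup>L lborel (Hf s \<Phi>)) at_top"
    by (rule iffD2[OF tendsto_cong[OF ev] lim])
  then show "(trunc_S s \<Phi> \<longlongrightarrow> integral\<^sup>L lborel (Hf s \<Phi>)) (at_right 0)"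
    by (simp add: filterlim_at_right_to_top)
  have "\<bar>integral\<^sup>L lborel (Hf s \<Phi>)\<bar> \<le> (\<integral> z. \<bar>Hf s \<Phi> z\<bar> \<partial>lborel)"
    using integral_norm_bound[of lborel "Hf s \<Phi>"] by simp
  also have "\<dots> \<le> integral\<^sup>L lborel w"
    using integrable_norm[OF Hi] wi Hb by (intro integral_mono) auto
  also have "integral\<^sup>L lborel w = N * (\<integral> z. indicator (fst ` K) (fst z) * g0 s (snd (z::(real^'n) \<times> (real^'n))) \<partial>lborel)"
  proof -
    have "integral\<^sup>L lborel w = (\<integral> z. N * (indicator (fst ` K) (fst z) * g0 s (snd (z::(real^'n) \<times> (real^'n)))) \<partial>lborel)"
      by (intro Bochner_Integration.integral_cong) (auto simp: w_def P_def)
    then show ?thesis by simp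
  qed
  finally show "\<bar>integral\<^sup>L lborel (Hf s \<Phi>)\<bar> \<le> (\<integral> z. indicator (fst ` K) (fst z) * g0 s (snd (z::(real^'n) \<times> (real^'n))) \<partial>lborel) * Cm_seminorm 2 \<Phi>"
    by (simp add: N_def mult.commute)
qed


theorem lemma7p4:
  fixes s :: real
  assumes "1/2 \<le> s" and "s < 1"
  shows "(\<forall>\<Phi> :: (real^'n) \<times> (real^'n) \<Rightarrow> real. test_fun \<Phi> \<longrightarrow>
            (\<forall>\<epsilon>>0. set_integrable lborel (Bc \<epsilon>) (kernel_S s \<Phi>)) \<and>
            (trunc_S s \<Phi> \<longlongrightarrow> S_op s \<Phi>) (at_right 0))
         \<and> distribution (S_op s :: ((real^'n) \<times> (real^'n) \<Rightarrow> real) \<Rightarrow> real)"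
proof -
  have s0: "0 < s" using assms by simp
  have s1: "s < 1" by fact
  have lim: "(trunc_S s \<Phi> \<longlongrightarrow> S_op s \<Phi>) (at_right 0)"
    and Seq: "S_op s \<Phi> = integral\<^sup>L lborel (Hf s \<Phi>)"
    if f: "test_fun \<Phi>" for \<Phi> :: "(real^'n) \<times> (real^'n) \<Rightarrow> real"
  proof -
    have Kc: "compact (tsupport \<Phi>)" using f by (simp add: test_fun_def)
    have l: "(trunc_S s \<Phi> \<longlongrightarrow> integral\<^sup>L lborel (Hf s \<Phi>)) (at_right 0)"
      by (rule core(1)[OF s0 s1 f Kc order_refl])
    show "S_op s \<Phi> = integral\<^sup>L lborel (Hf s \<Phi>)"
      unfolding S_op_def by (rule tendsto_Lim[OF _ l]) simp
    then show "(trunc_S s \<Phi> \<longlongrightarrow> S_op s \<Phi>) (at_right 0)" using l by simp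
  qed
  have add: "S_op s (\<lambda>x. f x + g x) = S_op s f + S_op s g"
    if f: "test_fun f" and g: "test_fun g" for f g :: "(real^'n) \<times> (real^'n) \<Rightarrow> real"
  proof -
    have ke: "kernel_S s (\<lambda>x. f x + g x) = (\<lambda>z. kernel_S s f z + kernel_S s g z)"
      by (auto simp: kernel_S_def fun_eq_iff add_divide_distrib[symmetric] algebra_simps)
    have ev: "eventually (\<lambda>\<epsilon>. trunc_S s (\<lambda>x. f x + g x) \<epsilon> = trunc_S s f \<epsilon> + trunc_S s g \<epsilon>) (at_right 0)"
      using eventually_at_right_less[of "0::real"]
    proof eventually_elim
      case (elim \<epsilon>)
      show ?case unfolding trunc_S_def ke
        by (rule set_integral_add(2)[OF set_int[OF s0 f elim] set_int[OF s0 g elim]])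
    qed
    have "(trunc_S s (\<lambda>x. f x + g x) \<longlongrightarrow> S_op s f + S_op s g) (at_right 0)"
      using iffD2[OF tendsto_cong[OF ev] tendsto_add[OF lim[OF f] lim[OF g]]] .
    then show ?thesis unfolding S_op_def[of s "\<lambda>x. f x + g x"] by (intro tendsto_Lim) simp_all
  qed
  have smul: "S_op s (\<lambda>x. c * f x) = c * S_op s f"
    if f: "test_fun f" for c and f :: "(real^'n) \<times> (real^'n) \<Rightarrow> real"
  proof -
    have ke: "kernel_S s (\<lambda>x. c * f x) = (\<lambda>z. c * kernel_S s f z)"
      by (simp add: kernel_S_def fun_eq_iff right_diff_distrib)
    have ev: "eventually (\<lambda>\<epsilon>. trunc_S s (\<lambda>x. c * f x) \<epsilon> = c * trunc_S s f \<epsilon>) (at_right 0)"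
      by (rule always_eventually) (simp add: trunc_S_def ke set_integral_mult_right)
    have "(trunc_S s (\<lambda>x. c * f x) \<longlongrightarrow> c * S_op s f) (at_right 0)"
      using iffD2[OF tendsto_cong[OF ev] tendsto_mult_left[OF lim[OF f]]] .
    then show ?thesis unfolding S_op_def[of s "\<lambda>x. c * f x"] by (intro tendsto_Lim) simp_all
  qed
  have bnd: "\<exists>C m. \<forall>f. test_fun f \<and> tsupport f \<subseteq> K \<longrightarrow> \<bar>S_op s f\<bar> \<le> C * Cm_seminorm m f"
    if Kc: "compact (K :: ((real^'n) \<times> (real^'n)) set)" for K
  proof (intro exI allI impI)
    fix f :: "(real^'n) \<times> (real^'n) \<Rightarrow> real"
    assume "test_fun f \<and> tsupport f \<subseteq> K"
    then have f: "test_fun f" and K: "tsupport f \<subseteq> K" by auto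
    show "\<bar>S_op s f\<bar> \<le> (\<integral> z. indicator (fst ` K) (fst z) * g0 s (snd (z::(real^'n) \<times> (real^'n))) \<partial>lborel) * Cm_seminorm 2 f"
      using core(2)[OF s0 s1 f Kc K] Seq[OF f] by simp
  qed
  show ?thesis
    unfolding distribution_def
    using lim set_int[OF s0] add smul bnd by blast
qed


end
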